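(* Let $k\ge2$ and $n\ge0$. The map $\phi:\mathcal{T}^k_n\to\overline{\mathcal{Q}}^k_n$ defined below is a well-defined bijection from compartmented trees with $n$ edges onto $k$-quasi-Stirling permutations of size $n$. For a non-root vertex $c$ of $T\in\mathcal{T}^k_n$ whose edge to its parent has label $\ell$, define recursively the word $W(c)=\ell\,U_1\,\ell\,U_2\,\ell\cdots\ell\,U_{k-1}\,\ell$, where $U_j$ is the concatenation of $W(c')$ over the children $c'$ of $c$ in its $j$-th compartment, from left to right (so $\ell$ occurs exactly $k$ times in $W(c)$ outside the $U_j$). Then $\phi(T)$ is the concatenation of $W(c)$ over the children $c$ of the root, from left to right. (Equivalently: label each half-edge at a non-root vertex $v$ with the label of the edge from $v$ to its parent, traverse edges and half-edges by a left-to-right depth-first walk, recording edge labels each time an edge is traversed and half-edge labels once.)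
   Context: For $k\ge2$, a compartmented tree with $n$ edges is a plane (ordered) rooted tree with $n$ edges labeled bijectively by $\{1,\dots,n\}$, in which every vertex other than the root has $k-2$ unlabeled half-edges serving as walls that separate its children into $k-1$ ordered, possibly empty, compartments (the root has no half-edges; its children form a single ordered list). $\mathcal{T}^k_n$ denotes the set of such trees. A $k$-quasi-Stirling permutation of size $n$ is a permutation $\pi$ of the multiset $\{1^k,\dots,n^k\}$ (each of $1,\dots,n$ appearing $k$ times) with no indices $i<j<m<\ell$ such that $\pi_i=\pi_m\neq\pi_j=\pi_\ell$; $\overline{\mathcal{Q}}^k_n$ is their set. *)

theory Defs
  imports "HOL-Library.Multiset"
begin

text \<open>A non-root vertex: the label of the edge to its parent, and its list of
compartments (each an ordered list of children).  The root is represented by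
the ordered list of its children (a forest).\<close>
datatype cnode = CNode nat "cnode list list"

fun wf_node :: "nat \<Rightarrow> cnode \<Rightarrow> bool" where
  "wf_node k (CNode l cs) = (length cs = k - 1 \<and> (\<forall>c\<in>set cs. \<forall>t\<in>set c. wf_node k t))"

fun node_labels :: "cnode \<Rightarrow> nat list" where
  "node_labels (CNode l cs) = l # concat (map (\<lambda>c. concat (map node_labels c)) cs)"

definition forest_labels :: "cnode list \<Rightarrow> nat list" where
  "forest_labels F = concat (map node_labels F)"

definition compartmented_trees :: "nat \<Rightarrow> nat \<Rightarrow> cnode list set" where
  "compartmented_trees k n =
     {F. (\<forall>t\<in>set F. wf_node k t) \<and> distinct (forest_labels F) \<and> set (forest_labels F) = {1..n}}"

fun W :: "cnode \<Rightarrow> nat list" where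
  "W (CNode l cs) = l # concat (map (\<lambda>c. concat (map W c) @ [l]) cs)"

definition phi :: "cnode list \<Rightarrow> nat list" where
  "phi F = concat (map W F)"

definition quasi_stirling :: "nat \<Rightarrow> nat \<Rightarrow> nat list set" where
  "quasi_stirling k n =
     {w. mset w = (\<Sum>i\<in>{1..n}. replicate_mset k i) \<and>
         \<not> (\<exists>i j m l. i < j \<and> j < m \<and> m < l \<and> l < length w \<and>
               w ! i = w ! m \<and> w ! j = w ! l \<and> w ! i \<noteq> w ! j)}"

end

theory Submission
  imports Defs "HOL-Library.Sublist"
begin


definition pf :: "'a list \<Rightarrow> bool" where
  "pf w \<longleftrightarrow> \<not>(\<exists>a b. a \<noteq> b \<and> subseq [a,b,a,b] w)"

lemma sub_drop_step:
  assumes "i < length w" "subseq xs (drop (Suc i) w)"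
  shows "subseq (w!i # xs) (drop i w)"
  using assms by (simp add: Cons_nth_drop_Suc[symmetric])

lemma sub_drop_mono:
  assumes "i \<le> j" "subseq xs (drop j w)"
  shows "subseq xs (drop i w)"
proof -
  have "drop i w = take (j - i) (drop i w) @ drop j w"
    using assms(1) by (metis append_take_drop_id drop_drop le_add_diff_inverse2)
  then show ?thesis using assms(2) by (metis subseq_drop_many)
qed

lemma sub_ex_idx:
  assumes "subseq (x#xs) w"
  shows "\<exists>i<length w. w!i = x \<and> subseq xs (drop (Suc i) w)"
proof -
  obtain us v vs where "w = us @ v # vs" "x = v" "subseq xs vs"
    using list_emb_ConsD[OF assms] by auto
  then show ?thesis by (intro exI[of _ "length us"]) auto
qed

lemma idx_iff:
  "(\<exists>i j m l. i < j \<and> j < m \<and> m < l \<and> l < length w \<and>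
               w ! i = w ! m \<and> w ! j = w ! l \<and> w ! i \<noteq> w ! j) \<longleftrightarrow> \<not> pf w"
proof
  assume "\<exists>i j m l. i < j \<and> j < m \<and> m < l \<and> l < length w \<and>
               w ! i = w ! m \<and> w ! j = w ! l \<and> w ! i \<noteq> w ! j"
  then obtain i j m l where h: "i < j" "j < m" "m < l" "l < length w"
    "w ! i = w ! m" "w ! j = w ! l" "w ! i \<noteq> w ! j" by blast
  have "subseq [w!l] (drop l w)" using sub_drop_step[of l w "[]"] h by simp
  then have "subseq [w!m, w!l] (drop m w)"
    using sub_drop_step[of m w "[w!l]"] sub_drop_mono[of "Suc m" l "[w!l]" w] h by simp
  then have "subseq [w!j, w!m, w!l] (drop j w)"
    using sub_drop_step[of j w "[w!m, w!l]"] sub_drop_mono[of "Suc j" m "[w!m, w!l]" w] h by simp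
  then have "subseq [w!i, w!j, w!m, w!l] (drop i w)"
    using sub_drop_step[of i w "[w!j, w!m, w!l]"] sub_drop_mono[of "Suc i" j "[w!j, w!m, w!l]" w] h by simp
  then have "subseq [w!i, w!j, w!m, w!l] w"
    using sub_drop_mono[of 0 i] by simp
  then show "\<not> pf w" unfolding pf_def using h by metis
next
  assume "\<not> pf w"
  then obtain a b where ab: "a \<noteq> b" "subseq [a,b,a,b] w" unfolding pf_def by blast
  obtain i where i: "i < length w" "w!i = a" "subseq [b,a,b] (drop (Suc i) w)"
    using sub_ex_idx[OF ab(2)] by blast
  obtain j where j: "j < length (drop (Suc i) w)" "(drop (Suc i) w)!j = b"
     "subseq [a,b] (drop (Suc j) (drop (Suc i) w))"
    using sub_ex_idx[OF i(3)] by blast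
  obtain m where m: "m < length (drop (Suc j) (drop (Suc i) w))" "(drop (Suc j) (drop (Suc i) w))!m = a"
     "subseq [b] (drop (Suc m) (drop (Suc j) (drop (Suc i) w)))"
    using sub_ex_idx[OF j(3)] by blast
  obtain l where l: "l < length (drop (Suc m) (drop (Suc j) (drop (Suc i) w)))"
     "(drop (Suc m) (drop (Suc j) (drop (Suc i) w)))!l = b"
    using sub_ex_idx[OF m(3)] by blast
  show "\<exists>i j m l. i < j \<and> j < m \<and> m < l \<and> l < length w \<and>
               w ! i = w ! m \<and> w ! j = w ! l \<and> w ! i \<noteq> w ! j"
    apply (rule exI[of _ i], rule exI[of _ "Suc i + j"], rule exI[of _ "Suc j + Suc i + m"],
        rule exI[of _ "Suc m + (Suc j + Suc i) + l"])
    using i j m l ab by (auto simp: add.commute add.left_commute)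
qed

lemma pat4: "subseq [a,b,c,d] (u1 @ a # u2 @ b # u3 @ c # u4 @ d # u5)"
proof -
  have "subseq [d] (u4 @ d # u5)" by (rule subseq_drop_many) simp
  then have "subseq [c,d] (u3 @ c # u4 @ d # u5)" by (intro subseq_drop_many) simp
  then have "subseq [b,c,d] (u2 @ b # u3 @ c # u4 @ d # u5)" by (intro subseq_drop_many) simp
  then show ?thesis by (intro subseq_drop_many) simp
qed

lemma subseq_set: "subseq p1 x \<Longrightarrow> set p1 \<subseteq> set x"
  by (induction rule: list_emb.induct) auto

lemma pf_infix: "pf (L @ P @ R) \<Longrightarrow> pf P"
  unfolding pf_def by (meson subseq_drop_many subseq_rev_drop_many)

lemma subseq_single: "subseq xs [l] \<longleftrightarrow> xs = [] \<or> xs = [l]"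
  by (cases xs) auto

lemma comb4:
  assumes "p1 @ p2 @ p3 = [a,b,a,b]" "a \<noteq> b" "p2 \<noteq> []"
    "set p2 \<inter> set p1 = {}" "set p2 \<inter> set p3 = {}"
  shows "p1 = [] \<and> p3 = []"
proof -
  define L where "L = [a,b,a,b]"
  have e: "p1 = take (length p1) L" "p2 = take (length p2) (drop (length p1) L)"
      "p3 = drop (length p1 + length p2) L"
    using assms(1) unfolding L_def by (metis append_eq_conv_conj drop_drop add.commute)+
  have len: "length p1 + length p2 \<le> 4" using arg_cong[OF assms(1), of length] by auto
  have "\<forall>i j. i + j \<le> 4 \<longrightarrow> j \<noteq> 0 \<longrightarrow> set (take j (drop i L)) \<inter> set (take i L) = {} \<longrightarrow>
     set (take j (drop i L)) \<inter> set (drop (i + j) L) = {} \<longrightarrow> i = 0 \<and> drop (i+j) L = []"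
  proof (intro allI impI)
    fix i j :: nat assume "i + j \<le> 4" "j \<noteq> 0"
      "set (take j (drop i L)) \<inter> set (take i L) = {}"
      "set (take j (drop i L)) \<inter> set (drop (i + j) L) = {}"
    moreover have "i = 0 \<or> i = 1 \<or> i = 2 \<or> i = 3 \<or> i = 4" using \<open>i + j \<le> 4\<close> by arith
    moreover have "j = 0 \<or> j = 1 \<or> j = 2 \<or> j = 3 \<or> j = 4" using \<open>i + j \<le> 4\<close> by arith
    ultimately show "i = 0 \<and> drop (i+j) L = []"
      using assms(2) unfolding L_def
      by (elim disjE) (simp_all add: numeral_eq_Suc)
  qed
  then show ?thesis using e len assms(3-5) by (metis length_0_conv take_eq_Nil)
qed

lemma pf_insert:
  assumes "pf (x @ y)" "pf u" "set u \<inter> set (x @ y) = {}"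
  shows "pf (x @ u @ y)"
  unfolding pf_def
proof clarify
  fix a b assume ab: "a \<noteq> b" "subseq [a,b,a,b] (x @ u @ y)"
  then obtain p1 q where q: "[a,b,a,b] = p1 @ q" "subseq p1 x" "subseq q (u @ y)"
    by (auto elim: subseq_appendE)
  then obtain p2 p3 where p: "q = p2 @ p3" "subseq p2 u" "subseq p3 y"
    by (auto elim: subseq_appendE)
  show False
  proof (cases "p2 = []")
    case True
    then have "subseq [a,b,a,b] (x @ y)" using q p by (simp add: list_emb_append_mono)
    then show False using assms(1) ab unfolding pf_def by blast
  next
    case False
    have s1: "set p1 \<subseteq> set x" using q(2) by (rule subseq_set)
    have s2: "set p2 \<subseteq> set u" using p(2) by (rule subseq_set)
    have s3: "set p3 \<subseteq> set y" using p(3) by (rule subseq_set)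
    have "p1 = [] \<and> p3 = []"
      using comb4[of p1 p2 p3 a b] q p ab False s1 s2 s3 assms(3) by auto
    then have "subseq [a,b,a,b] u" using q p by simp
    then show False using assms(2) ab unfolding pf_def by blast
  qed
qed

lemma pf_dup:
  assumes "pf Z" "Z \<noteq> []" "last Z = l"
  shows "pf (Z @ [l])"
  unfolding pf_def
proof clarify
  fix a b assume ab: "a \<noteq> b" "subseq [a,b,a,b] (Z @ [l])"
  define Z' where "Z' = butlast Z"
  have Z: "Z = Z' @ [l]" using append_butlast_last_id[OF assms(2)] assms(3) unfolding Z'_def by simp
  obtain p1 p2 where p: "[a,b,a,b] = p1 @ p2" "subseq p1 Z" "subseq p2 [l]"
    using ab(2) by (rule subseq_appendE)
  show False
  proof (cases "p2 = []")
    case True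
    then have "subseq [a,b,a,b] Z" using p by simp
    then show False using assms(1) ab unfolding pf_def by blast
  next
    case False
    then have "p2 = [l]" using p(3) by (simp add: subseq_single)
    then have e: "p1 = [a,b,a]" "b = l" using p(1) by auto
    have "subseq [a,b,a] (Z' @ [l])" using p(2) e Z by simp
    then obtain q1 q2 where q: "[a,b,a] = q1 @ q2" "subseq q1 Z'" "subseq q2 [l]"
      by (rule subseq_appendE)
    show False
    proof (cases "q2 = []")
      case True
      then have "subseq [a,b,a] Z'" using q by simp
      then have "subseq [a,b,a,b] Z" using Z e subseq_append[of "[a,b,a]" "[b]" Z'] by simp
      then show False using assms(1) ab unfolding pf_def by blast
    next
      case False
      then have "q2 = [l]" using q(3) by (simp add: subseq_single)
      then show False using q(1) e ab by auto
    qed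
  qed
qed

lemma pf_no: "pf w \<Longrightarrow> subseq [a,b,a,b] w \<Longrightarrow> a = b"
  unfolding pf_def by auto

lemma pf_flank:
  assumes "pf (L0 @ [a] @ P @ [a] @ R0)" "b \<in> set P" "b \<noteq> a"
  shows "b \<notin> set L0 \<and> b \<notin> set R0"
proof
  obtain P1 P2 where P: "P = P1 @ b # P2" using assms(2) using split_list by metis
  show "b \<notin> set L0"
  proof
    assume "b \<in> set L0"
    then obtain L1 L2 where "L0 = L1 @ b # L2" using split_list by metis
    then have "subseq [b,a,b,a] (L0 @ [a] @ P @ [a] @ R0)" using P pat4[of b a b a L1 L2 P1 P2 R0] by simp
    then show False using pf_no[OF assms(1)] assms(3) by blast
  qed
  show "b \<notin> set R0"
  proof
    assume "b \<in> set R0"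
    then obtain R1 R2 where "R0 = R1 @ b # R2" using split_list by metis
    then have "subseq [a,b,a,b] (L0 @ [a] @ P @ [a] @ R0)" using P pat4[of a b a b L0 P1 P2 R1 R2] by simp
    then show False using pf_no[OF assms(1)] assms(3) by blast
  qed
qed

lemma pf_tail:
  assumes "pf (a # M @ a # S)" "b \<in> set S" "b \<noteq> a"
  shows "b \<notin> set M"
proof
  assume "b \<in> set M"
  then obtain M1 M2 where M: "M = M1 @ b # M2" using split_list by metis
  obtain S1 S2 where S: "S = S1 @ b # S2" using assms(2) using split_list by metis
  have "subseq [a,b,a,b] (a # M @ a # S)" using M S pat4[of a b a b "[]" M1 M2 S1 S2] by simp
  then show False using pf_no[OF assms(1)] assms(3) by blast
qed



lemma phi_Nil[simp]: "phi [] = []" and phi_Cons[simp]: "phi (t # F) = W t @ phi F"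
  by (simp_all add: phi_def)

lemma fl_Nil[simp]: "forest_labels [] = []" and fl_Cons[simp]: "forest_labels (t # F) = node_labels t @ forest_labels F"
  by (simp_all add: forest_labels_def)

lemma W_alt: "W (CNode l cs) = l # concat (map (\<lambda>c. phi c @ [l]) cs)"
  by (simp add: phi_def)

lemma nl_alt: "node_labels (CNode l cs) = l # concat (map forest_labels cs)"
  unfolding forest_labels_def by simp

declare W.simps[simp del] node_labels.simps[simp del]

lemma set_W: "set (W t) = set (node_labels t)"
proof (induction t)
  case (CNode l cs)
  have "\<And>c. c \<in> set cs \<Longrightarrow> set (phi c) = set (forest_labels c)"
  proof -
    fix c assume c: "c \<in> set cs"
    show "set (phi c) = set (forest_labels c)"
      using CNode[OF c] by (induction c) auto
  qed
  then show ?case by (auto simp: W_alt nl_alt)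
qed

lemma set_phi: "set (phi F) = set (forest_labels F)"
  by (induction F) (auto simp: set_W)

lemma count_concat: "count (mset (concat L)) x = sum_list (map (\<lambda>y. count (mset y) x) L)"
  by (induction L) auto

lemma cnt_W:
  assumes "wf_node k t" "k \<ge> 1"
  shows "count (mset (W t)) x = k * count (mset (node_labels t)) x"
  using assms(1)
proof (induction t)
  case (CNode l cs)
  have len: "length cs = k - 1" using CNode.prems by simp
  have ph: "count (mset (phi c)) x = k * count (mset (forest_labels c)) x" if c: "c \<in> set cs" for c
  proof -
    have "\<forall>t\<in>set c. wf_node k t" using CNode.prems c by simp
    then show ?thesis using CNode.IH[OF c] by (induction c) (auto simp: algebra_simps)
  qed
  define d where "d = (if x = l then 1 else 0 :: nat)"
  have "count (mset (W (CNode l cs))) x = d + sum_list (map (\<lambda>c. count (mset (phi c)) x + d) cs)"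
    by (simp add: W_alt count_concat d_def comp_def)
  also have "\<dots> = d + sum_list (map (\<lambda>c. k * count (mset (forest_labels c)) x + d) cs)"
    by (rule arg_cong[where f="\<lambda>z. d + sum_list z"], rule map_cong) (simp_all add: ph)
  also have "\<dots> = d + k * sum_list (map (\<lambda>c. count (mset (forest_labels c)) x) cs) + length cs * d"
    by (simp add: sum_list_addf sum_list_const_mult sum_list_triv)
  also have "\<dots> = k * (d + sum_list (map (\<lambda>c. count (mset (forest_labels c)) x) cs))"
  proof -
    obtain k' where "k = Suc k'" using assms(2) by (cases k) auto
    then show ?thesis using len by (simp add: algebra_simps)
  qed
  also have "\<dots> = k * count (mset (node_labels (CNode l cs))) x"
    by (simp add: nl_alt count_concat d_def comp_def)
  finally show ?case .
qed

lemma cnt_phi: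
  assumes "\<forall>t\<in>set F. wf_node k t" "k \<ge> 1"
  shows "count (mset (phi F)) x = k * count (mset (forest_labels F)) x"
  using assms by (induction F) (auto simp: cnt_W algebra_simps)



fun lab :: "cnode \<Rightarrow> nat" where "lab (CNode l cs) = l"

lemma W_hd: "W t = lab t # tl (W t)"
  by (cases t) (simp add: W_alt)

lemma W_ne: "W t \<noteq> []"
  using W_hd by (metis list.distinct(1))

lemma lab_in: "lab t \<in> set (node_labels t)"
  by (cases t) (simp add: nl_alt)

lemma W_last:
  assumes "wf_node k t" "k \<ge> 2"
  shows "last (W t) = lab t"
proof (cases t)
  case (CNode l cs)
  then have "cs \<noteq> []" using assms by auto
  then obtain cs' c where "cs = cs' @ [c]" by (metis rev_exhaust)
  then show ?thesis using CNode by (simp add: W_alt)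
qed

lemma first_sep:
  "l \<notin> set x \<Longrightarrow> l \<notin> set y \<Longrightarrow> x @ l # R = y @ l # R' \<Longrightarrow> x = y \<and> R = R'"
proof (induction x arbitrary: y)
  case Nil
  then show ?case by (cases y) auto
next
  case (Cons a x)
  then show ?case by (cases y) auto
qed

lemma seg_inj:
  "\<forall>x\<in>set xs. l \<notin> set x \<Longrightarrow> \<forall>y\<in>set ys. l \<notin> set y \<Longrightarrow>
   concat (map (\<lambda>x. x @ [l]) xs) = concat (map (\<lambda>y. y @ [l]) ys) \<Longrightarrow> xs = ys"
proof (induction xs arbitrary: ys)
  case Nil
  then show ?case by (cases ys) auto
next
  case (Cons x xs)
  note p = Cons.prems
  show ?case
  proof (cases ys)
    case Nil
    then show ?thesis using p(3) by simp
  next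
    case (Cons y ys')
    have e: "x @ l # concat (map (\<lambda>x. x @ [l]) xs) = y @ l # concat (map (\<lambda>y. y @ [l]) ys')"
      using p(3) unfolding Cons by simp
    have "x = y \<and> concat (map (\<lambda>x. x @ [l]) xs) = concat (map (\<lambda>y. y @ [l]) ys')"
      using first_sep[OF _ _ e] p(1,2) unfolding Cons by simp
    moreover have "\<forall>x\<in>set xs. l \<notin> set x" "\<forall>y\<in>set ys'. l \<notin> set y"
      using p(1,2) unfolding Cons by simp_all
    ultimately show ?thesis using Cons.IH[of ys'] unfolding Cons by simp
  qed
qed

lemma eq_blocks:
  assumes "u @ r = v @ r'" "u \<noteq> []" "v \<noteq> []" "last u = l" "last v = l" "l \<notin> set r" "l \<notin> set r'"
  shows "u = v"
proof -
  obtain us where us: "(u = v @ us \<and> r' = us @ r) \<or> (u @ us = v \<and> r = us @ r')"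
    using assms(1) unfolding append_eq_append_conv2 by blast
  show ?thesis
  proof (cases "us = []")
    case True
    then show ?thesis using us by auto
  next
    case False
    then have "last us \<in> set us" by simp
    moreover have "last us = l" using us False assms(4,5) by (metis last_appendR)
    ultimately show ?thesis using us assms(6,7) by auto
  qed
qed

lemma forest_inj:
  assumes "k \<ge> 2"
    "\<And>t t'. t \<in> set F \<Longrightarrow> wf_node k t \<Longrightarrow> wf_node k t' \<Longrightarrow> distinct (node_labels t) \<Longrightarrow>
        distinct (node_labels t') \<Longrightarrow> W t = W t' \<Longrightarrow> t = t'"
    "\<forall>t\<in>set F. wf_node k t" "\<forall>t\<in>set F'. wf_node k t"
    "distinct (forest_labels F)" "distinct (forest_labels F')" "phi F = phi F'"
  shows "F = F'"
  using assms(2-)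
proof (induction F arbitrary: F')
  case Nil
  then show ?case by (cases F') (auto simp: W_ne)
next
  case (Cons t G)
  note H = Cons.prems(1)
  have wfF: "\<forall>t\<in>set (t # G). wf_node k t" and wfF': "\<forall>t\<in>set F'. wf_node k t"
    and dF: "distinct (forest_labels (t # G))" and dF': "distinct (forest_labels F')"
    and pe: "phi (t # G) = phi F'" using Cons.prems(2-6) by auto
  show ?case
  proof (cases F')
    case Nil
    then show ?thesis using pe W_ne by simp
  next
    case (Cons t' G')
    have eq: "W t @ phi G = W t' @ phi G'" using pe unfolding Cons by simp
    have ll: "lab t = lab t'" using eq W_hd[of t] W_hd[of t'] by (metis Cons_eq_appendI list.inject)
    have n1: "lab t \<notin> set (phi G)"
      using dF lab_in[of t] by (auto simp: set_phi)
    have n2: "lab t \<notin> set (phi G')"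
      using dF' lab_in[of t'] ll unfolding Cons by (auto simp: set_phi)
    have wt: "wf_node k t" "wf_node k t'" using wfF wfF' unfolding Cons by auto
    have "W t = W t'"
      using eq_blocks[OF eq W_ne W_ne W_last[OF wt(1) assms(1)] _ n1 n2] W_last[OF wt(2) assms(1)] ll
      by simp
    moreover have "distinct (node_labels t)" "distinct (node_labels t')"
      using dF dF' unfolding Cons by auto
    ultimately have tt: "t = t'" using H[of t t'] wt by simp
    have "phi G = phi G'" using eq \<open>W t = W t'\<close> by simp
    moreover have "\<And>t t'. t \<in> set G \<Longrightarrow> wf_node k t \<Longrightarrow> wf_node k t' \<Longrightarrow> distinct (node_labels t) \<Longrightarrow>
        distinct (node_labels t') \<Longrightarrow> W t = W t' \<Longrightarrow> t = t'"
      using H by (metis list.set_intros(2))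
    moreover have "\<forall>t\<in>set G. wf_node k t" "\<forall>t\<in>set G'. wf_node k t"
      "distinct (forest_labels G)" "distinct (forest_labels G')"
      using wfF wfF' dF dF' unfolding Cons by auto
    ultimately have "G = G'" using Cons.IH[of G'] by blast
    then show ?thesis using tt unfolding Cons by simp
  qed
qed

lemma W_inj:
  assumes "k \<ge> 2"
  shows "wf_node k t \<Longrightarrow> wf_node k t' \<Longrightarrow> distinct (node_labels t) \<Longrightarrow> distinct (node_labels t')
     \<Longrightarrow> W t = W t' \<Longrightarrow> t = t'"
proof (induction t arbitrary: t')
  case (CNode l cs)
  obtain l' cs' where t': "t' = CNode l' cs'" by (cases t')
  have "l = l'" using CNode.prems t' by (simp add: W_alt)
  have eq: "concat (map (\<lambda>x. x @ [l]) (map phi cs)) = concat (map (\<lambda>x. x @ [l]) (map phi cs'))"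
    using CNode.prems t' \<open>l = l'\<close> by (simp add: W_alt comp_def)
  have d1: "distinct (concat (map forest_labels cs))" "l \<notin> set (concat (map forest_labels cs))"
    using CNode.prems(3) by (simp_all add: nl_alt)
  have d2: "distinct (concat (map forest_labels cs'))" "l \<notin> set (concat (map forest_labels cs'))"
    using CNode.prems(4) t' \<open>l = l'\<close> by (simp_all add: nl_alt)
  have "map phi cs = map phi cs'"
    using seg_inj[OF _ _ eq] d1(2) d2(2) by (auto simp: set_phi)
  then have len: "length cs = length cs'" and ph: "\<And>i. i < length cs \<Longrightarrow> phi (cs!i) = phi (cs'!i)"
    by (metis length_map, metis length_map nth_map)
  have "cs ! i = cs' ! i" if i: "i < length cs" for i
  proof (rule forest_inj[OF assms])
    show "\<And>t t''. t \<in> set (cs!i) \<Longrightarrow> wf_node k t \<Longrightarrow> wf_node k t'' \<Longrightarrow> distinct (node_labels t) \<Longrightarrow>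
        distinct (node_labels t'') \<Longrightarrow> W t = W t'' \<Longrightarrow> t = t''"
      using CNode.IH i by (meson nth_mem)
    show "\<forall>t\<in>set (cs!i). wf_node k t" using CNode.prems(1) i nth_mem by fastforce
    show "\<forall>t\<in>set (cs'!i). wf_node k t" using CNode.prems(2) t' i len nth_mem by fastforce
    show "distinct (forest_labels (cs!i))" using d1(1) i by (simp add: distinct_concat_iff)
    show "distinct (forest_labels (cs'!i))" using d2(1) i len by (simp add: distinct_concat_iff)
    show "phi (cs!i) = phi (cs'!i)" using ph i .
  qed
  then have "cs = cs'" using len by (simp add: nth_equalityI)
  then show ?case using t' \<open>l = l'\<close> by simp
qed

lemma phi_inj:
  assumes "k \<ge> 2"
  shows "inj_on phi (compartmented_trees k n)"
  unfolding inj_on_def compartmented_trees_def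
  using forest_inj[OF assms W_inj[OF assms]] by blast



lemma pf_short: "length w < 4 \<Longrightarrow> pf w"
  unfolding pf_def using list_emb_length by fastforce

lemma last_blk: "last (l # concat (map (\<lambda>c. f c @ [l]) cs)) = l"
  by (induction cs rule: rev_induct) auto

lemma pf_build:
  "(\<And>c. c \<in> set cs \<Longrightarrow> pf (f c) \<and> l \<notin> set (g c) \<and> set (f c) = set (g c)) \<Longrightarrow>
   distinct (concat (map g cs)) \<Longrightarrow> pf (l # concat (map (\<lambda>c. f c @ [l]) cs))"
proof (induction cs rule: rev_induct)
  case Nil
  then show ?case by (simp add: pf_short)
next
  case (snoc c cs)
  note H = snoc.prems(1)
  define Z where "Z = l # concat (map (\<lambda>c. f c @ [l]) cs)"
  have d: "distinct (concat (map g cs))" "set (concat (map g cs)) \<inter> set (g c) = {}"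
    using snoc.prems(2) by auto
  have pZ: "pf Z" unfolding Z_def using snoc.IH H d(1) by simp
  have pZl: "pf (Z @ [l])" using pf_dup[OF pZ] unfolding Z_def using last_blk[of l f cs] by simp
  have sZ: "set Z = insert l (set (concat (map g cs)))"
  proof -
    have "set Z = insert l (\<Union>c'\<in>set cs. set (f c'))" unfolding Z_def by auto
    also have "\<dots> = insert l (\<Union>c'\<in>set cs. set (g c'))" using H by auto
    finally show ?thesis by simp
  qed
  have disj: "set (f c) \<inter> set (Z @ [l]) = {}"
    using sZ d(2) H[of c] by auto
  have "pf (Z @ f c @ [l])" using pf_insert[OF pZl _ disj] H[of c] by simp
  then show ?case unfolding Z_def by simp
qed

lemma pf_forest:
  "(\<And>t. t \<in> set F \<Longrightarrow> pf (W t)) \<Longrightarrow> distinct (forest_labels F) \<Longrightarrow> pf (phi F)"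
proof (induction F)
  case Nil
  then show ?case by (simp add: pf_short)
next
  case (Cons t G)
  have p1: "pf (W t)" using Cons.prems(1) by simp
  have p2: "pf (phi G)" using Cons.IH Cons.prems by simp
  have disj: "set (phi G) \<inter> set (W t @ []) = {}"
    using Cons.prems(2) by (auto simp: set_phi set_W)
  show ?case using pf_insert[of "W t" "[]", OF _ p2 disj] p1 by simp
qed

lemma pf_W: "distinct (node_labels t) \<Longrightarrow> pf (W t)"
proof (induction t)
  case (CNode l cs)
  have d: "distinct (concat (map forest_labels cs))" "l \<notin> set (concat (map forest_labels cs))"
    using CNode.prems by (simp_all add: nl_alt)
  have "pf (phi c) \<and> l \<notin> set (forest_labels c) \<and> set (phi c) = set (forest_labels c)"
    if c: "c \<in> set cs" for c
  proof (intro conjI)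
    have dc: "distinct (forest_labels c)" using d(1) c by (simp add: distinct_concat_iff)
    have "\<And>t. t \<in> set c \<Longrightarrow> distinct (node_labels t)"
      using dc by (induction c) auto
    then show "pf (phi c)" using pf_forest[OF _ dc] CNode.IH[OF c] by blast
    show "l \<notin> set (forest_labels c)" using d(2) c by auto
    show "set (phi c) = set (forest_labels c)" by (rule set_phi)
  qed
  then show ?case using pf_build[of cs phi l forest_labels] d(1) by (simp add: W_alt)
qed



lemma split_sep:
  "count (mset r) a = m \<Longrightarrow> \<exists>Us S. r = concat (map (\<lambda>u. u @ [a]) Us) @ S \<and> length Us = m \<and>
      (\<forall>u\<in>set Us. a \<notin> set u) \<and> a \<notin> set S"
proof (induction m arbitrary: r)
  case 0
  then show ?case by (intro exI[of _ "[]"] exI[of _ r]) auto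
next
  case (Suc m)
  then have "a \<in> set r" by (metis count_mset_0_iff nat.simps(3))
  then obtain u r' where r: "r = u @ a # r'" "a \<notin> set u" using split_list_first by metis
  moreover have "count (mset u) a = 0" using r(2) by simp
  ultimately have "count (mset r') a = m" using Suc.prems by (simp del: count_mset_0_iff)
  then obtain Us S where h: "r' = concat (map (\<lambda>u. u @ [a]) Us) @ S" "length Us = m"
      "\<forall>u\<in>set Us. a \<notin> set u" "a \<notin> set S" using Suc.IH by blast
  show ?case
    apply (intro exI[of _ "u # Us"] exI[of _ S])
    using h r by simp
qed

lemma blk_shift: "a # concat (map (\<lambda>u. u @ [a]) Us) = concat (map (\<lambda>u. a # u) Us) @ [a]"
  by (induction Us) auto

lemma count_out:
  assumes "x \<notin> set L" "x \<notin> set R"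
  shows "count (mset (L @ u @ R)) x = count (mset u) x"
  using assms by (simp add: count_mset_0_iff[symmetric] del: count_mset_0_iff)

lemma parse:
  assumes "k \<ge> 2"
  shows "pf w \<Longrightarrow> \<forall>x\<in>set w. count (mset w) x = k \<Longrightarrow> \<exists>F. (\<forall>t\<in>set F. wf_node k t) \<and> phi F = w"
proof (induction "length w" arbitrary: w rule: less_induct)
  case less
  show ?case
  proof (cases w)
    case Nil
    then show ?thesis by (intro exI[of _ "[]"]) simp
  next
    case (Cons a r)
    have pw: "pf w" and cw: "\<forall>x\<in>set w. count (mset w) x = k" using less.prems by auto
    have "Suc (count (mset r) a) = k" using cw Cons by simp
    then have ca: "count (mset r) a = k - 1" by simp
    obtain Us S where sp: "r = concat (map (\<lambda>u. u @ [a]) Us) @ S" "length Us = k - 1"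
      "\<forall>u\<in>set Us. a \<notin> set u" "a \<notin> set S" using split_sep[OF ca] by blast
    have w_eq: "w = a # concat (map (\<lambda>u. u @ [a]) Us) @ S" using Cons sp(1) by simp
    have "\<exists>F. (\<forall>t\<in>set F. wf_node k t) \<and> phi F = u" if u: "u \<in> set Us" for u
    proof -
      obtain Us1 Us2 where Us: "Us = Us1 @ u # Us2" using split_list[OF u] by blast
      define L0 where "L0 = concat (map (\<lambda>u. a # u) Us1)"
      define R0 where "R0 = concat (map (\<lambda>u. u @ [a]) Us2) @ S"
      have w2: "w = L0 @ [a] @ u @ [a] @ R0"
        unfolding w_eq Us L0_def R0_def
        by (simp add: blk_shift[of a Us1, simplified])
      have pu: "pf u" using pf_infix[of "L0 @ [a]" u "[a] @ R0"] pw w2 by simp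
      have au: "a \<notin> set u" using sp(3) u by blast
      have cu: "\<forall>x\<in>set u. count (mset u) x = k"
      proof
        fix x assume x: "x \<in> set u"
        then have xa: "x \<noteq> a" using au by blast
        have "x \<notin> set L0 \<and> x \<notin> set R0" using pf_flank[of L0 a u R0 x] pw w2 x xa by simp
        then have "count (mset w) x = count (mset u) x"
          unfolding w2 using count_out[of x "L0 @ [a]" "[a] @ R0" u] xa by simp
        then show "count (mset u) x = k" using cw x w2 by simp
      qed
      have "length u < length w" using w2 by simp
      then show ?thesis using less.hyps pu cu by blast
    qed
    from \<open>\<And>u. u \<in> set Us \<Longrightarrow> \<exists>F. (\<forall>t\<in>set F. wf_node k t) \<and> phi F = u\<close>
    obtain g where g: "\<And>u. u \<in> set Us \<Longrightarrow> (\<forall>t\<in>set (g u). wf_node k t) \<and> phi (g u) = u"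
      by metis
    have "Us \<noteq> []" using sp(2) assms by auto
    then obtain Us' ul where Usl: "Us = Us' @ [ul]" by (metis rev_exhaust)
    define M where "M = concat (map (\<lambda>u. u @ [a]) Us') @ ul"
    have w3: "w = a # M @ a # S" unfolding w_eq M_def Usl by simp
    have pS: "pf S" using pf_infix[of "a # M @ [a]" S "[]"] pw w3 by simp
    have cS: "\<forall>x\<in>set S. count (mset S) x = k"
    proof
      fix x assume x: "x \<in> set S"
      then have xa: "x \<noteq> a" using sp(4) by blast
      have "x \<notin> set M" using pf_tail[of a M S x] pw w3 x xa by simp
      then have "count (mset w) x = count (mset S) x"
        unfolding w3 using count_out[of x "a # M @ [a]" "[]" S] xa by simp
      then show "count (mset S) x = k" using cw x w3 by simp
    qed
    have "length S < length w" using w3 by simp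
    then obtain FS where FS: "\<forall>t\<in>set FS. wf_node k t" "phi FS = S" using less.hyps pS cS by blast
    define T where "T = CNode a (map g Us)"
    have wfT: "wf_node k T" unfolding T_def using sp(2) g by auto
    have "map (\<lambda>c. phi c @ [a]) (map g Us) = map (\<lambda>u. u @ [a]) Us"
      using g by simp
    then have "concat (map (\<lambda>c. phi c @ [a]) (map g Us)) = concat (map (\<lambda>u. u @ [a]) Us)"
      by (rule arg_cong[where f=concat])
    then have "W T = a # concat (map (\<lambda>u. u @ [a]) Us)" unfolding T_def W_alt by (simp only:)
    then have "phi (T # FS) = w" using FS w_eq by simp
    then show ?thesis using wfT FS by (intro exI[of _ "T # FS"]) simp
  qed
qed



lemma count_target:
  fixes n k x :: nat
  shows "count (\<Sum>i\<in>{1..n}. replicate_mset k i) x = (if x \<in> {1..n} then k else (0::nat))"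
proof -
  have "(\<Sum>a\<in>{1..n}. if x = a then k else 0) = (if x \<in> {1..n} then k else (0::nat))"
    by (rule sum.delta') simp
  then show ?thesis unfolding count_sum count_replicate_mset .
qed

theorem theorem4p2:
  fixes k n :: nat
  assumes "k \<ge> 2"
  shows "bij_betw phi (compartmented_trees k n) (quasi_stirling k n)"
  unfolding bij_betw_def
proof (intro conjI)
  show "inj_on phi (compartmented_trees k n)" by (rule phi_inj[OF assms])
  have k1: "k \<ge> 1" using assms by simp
  show "phi ` compartmented_trees k n = quasi_stirling k n"
  proof
    show "phi ` compartmented_trees k n \<subseteq> quasi_stirling k n"
    proof
      fix w assume "w \<in> phi ` compartmented_trees k n"
      then obtain F where F: "w = phi F" "\<forall>t\<in>set F. wf_node k t" "distinct (forest_labels F)"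
        "set (forest_labels F) = {1..n}" unfolding compartmented_trees_def by blast
      have "count (mset w) x = count (\<Sum>i\<in>{1..n}. replicate_mset k i) x" for x
      proof -
        have "count (mset w) x = k * count (mset (forest_labels F)) x"
          using cnt_phi[OF F(2) k1] F(1) by simp
        also have "\<dots> = k * (if x \<in> {1..n} then 1 else 0)"
          using F(3,4) distinct_count_atmost_1 by metis
        finally show ?thesis using count_target[where n=n and k=k and x=x] by simp
      qed
      then have m: "mset w = (\<Sum>i\<in>{1..n}. replicate_mset k i)" by (simp add: multiset_eq_iff)
      have "\<And>t. t \<in> set F \<Longrightarrow> distinct (node_labels t)"
        using F(3) by (induction F) auto
      then have "pf w" using pf_forest[OF _ F(3)] pf_W F(1) by blast
      then show "w \<in> quasi_stirling k n"
        unfolding quasi_stirling_def using m idx_iff[of w] by blast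
    qed
  next
    show "quasi_stirling k n \<subseteq> phi ` compartmented_trees k n"
    proof
      fix w assume "w \<in> quasi_stirling k n"
      then have m: "mset w = (\<Sum>i\<in>{1..n}. replicate_mset k i)" and pw: "pf w"
        unfolding quasi_stirling_def using idx_iff[of w] by blast+
      have cw: "count (mset w) x = (if x \<in> {1..n} then k else 0)" for x
        using m count_target by metis
      have "\<forall>x\<in>set w. count (mset w) x = k"
      proof
        fix x assume "x \<in> set w"
        then have "count (mset w) x \<noteq> 0" by simp
        then show "count (mset w) x = k" using cw[of x] by presburger
      qed
      then obtain F where F: "\<forall>t\<in>set F. wf_node k t" "phi F = w" using parse[OF assms pw] by blast
      have c: "k * count (mset (forest_labels F)) x = (if x \<in> {1..n} then k else 0)" for x
        using cnt_phi[OF F(1) k1, of x] F(2) cw[of x] by simp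
      have c1: "count (mset (forest_labels F)) x = (if x \<in> {1..n} then 1 else 0)" for x
        using c[of x] k1 by (cases "x \<in> {1..n}") auto
      have s: "set (forest_labels F) = {1..n}"
      proof -
        have "x \<in> set (forest_labels F) \<longleftrightarrow> x \<in> {1..n}" for x
          using c1[of x] count_mset_0_iff[of "forest_labels F" x] by (cases "x \<in> {1..n}") auto
        then show ?thesis by blast
      qed
      have "distinct (forest_labels F)"
        unfolding distinct_count_atmost_1 using c1 s by simp
      then have "F \<in> compartmented_trees k n" unfolding compartmented_trees_def using F(1) s by blast
      then show "w \<in> phi ` compartmented_trees k n" using F(2) by blast
    qed
  qed
qed

end
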